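(* Every SSSCG with weakly monotonic cost functions admits an OSE $(\sigma_\ell,\nu)$ in which $\sigma_\ell$ is pure.
   Context: A symmetric Stackelberg singleton congestion game (SSSCG) consists of a leader $\ell$, a finite set $F$ of followers, a finite set $R$ of resources which every player may select (each player selects exactly one), and cost functions $c_{i,\ell},c_{i,f}:\mathbb N\to\mathbb Q$ ($i\in R$) for the leader and the followers with $c_{i,\ell}(0)=c_{i,f}(0)=0$. The leader commits to a probability distribution $\sigma_\ell$ on $R$ (pure if it puts probability $1$ on one resource). A followers' configuration is $\nu\in\mathbb N^R$ with $\sum_i\nu_i=|F|$. The followers' expected cost of resource $i$ with $x$ followers is $c^{\sigma_\ell}_{i,f}(x)=\sigma_\ell(i)c_{i,f}(x+1)+(1-\sigma_\ell(i))c_{i,f}(x)$; the leader's cost is $c_\ell^{(\sigma_\ell,\nu)}=\sum_{i\in R}\sigma_\ell(i)c_{i,\ell}(\nu_i+1)$. $\nu$ is a Nash equilibrium for $\sigma_\ell$ ($\nu\in E^{\sigma_\ell}$) if for all $i$ with $\nu_i>0$ and all $j\ne i$, $c^{\sigma_\ell}_{i,f}(\nu_i)\le c^{\sigma_\ell}_{j,f}(\nu_j+1)$. An optimistic Stackelberg equilibrium (OSE) is a pair $(\sigma_\ell,\nu)$ with $\nu\in E^{\sigma_\ell}$ minimizing $c_\ell^{(\sigma_\ell,\nu)}$ over all such pairs. Weakly monotonic: $c_{i,\ell}(x)\le c_{i,\ell}(x+1)$, $c_{i,f}(x)\le c_{i,f}(x+1)$ for all $i,x$. *)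

theory Defs
  imports Complex_Main
begin

text \<open>R : finite set of resources; F : finite set of followers (only its cardinality matters);
  cl i x : leader's cost of resource i with x users; cf i x : followers' cost.\<close>

definition ssscg :: "'r set \<Rightarrow> 'f set \<Rightarrow> ('r \<Rightarrow> nat \<Rightarrow> rat) \<Rightarrow> ('r \<Rightarrow> nat \<Rightarrow> rat) \<Rightarrow> bool" where
  "ssscg R F cl cf \<longleftrightarrow> finite R \<and> R \<noteq> {} \<and> finite F \<and>
     (\<forall>i\<in>R. cl i 0 = 0 \<and> cf i 0 = 0)"

definition weakly_monotonic :: "'r set \<Rightarrow> ('r \<Rightarrow> nat \<Rightarrow> rat) \<Rightarrow> ('r \<Rightarrow> nat \<Rightarrow> rat) \<Rightarrow> bool" where
  "weakly_monotonic R cl cf \<longleftrightarrow> (\<forall>i\<in>R. \<forall>x. cl i x \<le> cl i (Suc x) \<and> cf i x \<le> cf i (Suc x))"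

definition leader_strategy :: "'r set \<Rightarrow> ('r \<Rightarrow> real) \<Rightarrow> bool" where
  "leader_strategy R \<sigma> \<longleftrightarrow> (\<forall>i. \<sigma> i \<ge> 0) \<and> (\<forall>i. i \<notin> R \<longrightarrow> \<sigma> i = 0) \<and> (\<Sum>i\<in>R. \<sigma> i) = 1"

definition pure_strategy :: "'r set \<Rightarrow> ('r \<Rightarrow> real) \<Rightarrow> bool" where
  "pure_strategy R \<sigma> \<longleftrightarrow> leader_strategy R \<sigma> \<and> (\<exists>i\<in>R. \<sigma> i = 1)"

definition configuration :: "'r set \<Rightarrow> 'f set \<Rightarrow> ('r \<Rightarrow> nat) \<Rightarrow> bool" where
  "configuration R F \<nu> \<longleftrightarrow> (\<forall>i. i \<notin> R \<longrightarrow> \<nu> i = 0) \<and> (\<Sum>i\<in>R. \<nu> i) = card F"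

definition follower_cost :: "('r \<Rightarrow> nat \<Rightarrow> rat) \<Rightarrow> ('r \<Rightarrow> real) \<Rightarrow> 'r \<Rightarrow> nat \<Rightarrow> real" where
  "follower_cost cf \<sigma> i x = \<sigma> i * of_rat (cf i (Suc x)) + (1 - \<sigma> i) * of_rat (cf i x)"

definition leader_cost :: "'r set \<Rightarrow> ('r \<Rightarrow> nat \<Rightarrow> rat) \<Rightarrow> ('r \<Rightarrow> real) \<Rightarrow> ('r \<Rightarrow> nat) \<Rightarrow> real" where
  "leader_cost R cl \<sigma> \<nu> = (\<Sum>i\<in>R. \<sigma> i * of_rat (cl i (Suc (\<nu> i))))"

definition is_NE :: "'r set \<Rightarrow> 'f set \<Rightarrow> ('r \<Rightarrow> nat \<Rightarrow> rat) \<Rightarrow> ('r \<Rightarrow> real) \<Rightarrow> ('r \<Rightarrow> nat) \<Rightarrow> bool" where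
  "is_NE R F cf \<sigma> \<nu> \<longleftrightarrow> configuration R F \<nu> \<and>
     (\<forall>i\<in>R. \<forall>j\<in>R. \<nu> i > 0 \<and> j \<noteq> i \<longrightarrow>
        follower_cost cf \<sigma> i (\<nu> i) \<le> follower_cost cf \<sigma> j (Suc (\<nu> j)))"

definition is_OSE :: "'r set \<Rightarrow> 'f set \<Rightarrow> ('r \<Rightarrow> nat \<Rightarrow> rat) \<Rightarrow> ('r \<Rightarrow> nat \<Rightarrow> rat)
    \<Rightarrow> ('r \<Rightarrow> real) \<Rightarrow> ('r \<Rightarrow> nat) \<Rightarrow> bool" where
  "is_OSE R F cl cf \<sigma> \<nu> \<longleftrightarrow> leader_strategy R \<sigma> \<and> is_NE R F cf \<sigma> \<nu> \<and>
     (\<forall>\<sigma>' \<nu>'. leader_strategy R \<sigma>' \<and> is_NE R F cf \<sigma>' \<nu>' \<longrightarrow>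
        leader_cost R cl \<sigma> \<nu> \<le> leader_cost R cl \<sigma>' \<nu>')"

end

theory Submission
  imports Defs
begin

definition pstrat :: "'r \<Rightarrow> 'r \<Rightarrow> real" where
  "pstrat i = (\<lambda>j. if j = i then 1 else 0)"

definition mv :: "('r \<Rightarrow> nat) \<Rightarrow> 'r \<Rightarrow> 'r \<Rightarrow> 'r \<Rightarrow> nat" where
  "mv \<mu> j k = \<mu>(j := \<mu> j - 1, k := \<mu> k + 1)"

lemma mv_sum:
  fixes g :: "'r \<Rightarrow> nat \<Rightarrow> real"
  assumes "finite R" "j \<in> R" "k \<in> R" "j \<noteq> k"
  shows "(\<Sum>l\<in>R. g l (mv \<mu> j k l)) = (\<Sum>l\<in>R. g l (\<mu> l))
      + (g j (\<mu> j - 1) - g j (\<mu> j)) + (g k (\<mu> k + 1) - g k (\<mu> k))"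
proof -
  have "(\<Sum>l\<in>R. g l (mv \<mu> j k l) - g l (\<mu> l)) = (\<Sum>l\<in>{j,k}. g l (mv \<mu> j k l) - g l (\<mu> l))"
    by (rule sum.mono_neutral_right) (use assms in \<open>auto simp: mv_def\<close>)
  also have "\<dots> = (g j (\<mu> j - 1) - g j (\<mu> j)) + (g k (\<mu> k + 1) - g k (\<mu> k))"
    using assms by (simp add: mv_def)
  finally show ?thesis by (simp add: sum_subtractf)
qed

lemma mv_conf:
  assumes "finite R" "j \<in> R" "k \<in> R" "j \<noteq> k" "\<mu> j > 0" "configuration R F \<mu>"
  shows "configuration R F (mv \<mu> j k)"
proof -
  have "real (\<Sum>l\<in>R. mv \<mu> j k l) = (\<Sum>l\<in>R. real (mv \<mu> j k l))" by simp
  also have "\<dots> = (\<Sum>l\<in>R. real (\<mu> l))"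
    using mv_sum[OF assms(1-4), of "\<lambda>l n. real n" \<mu>] assms(5) by (simp add: of_nat_diff)
  also have "\<dots> = real (\<Sum>l\<in>R. \<mu> l)" by simp
  finally have "(\<Sum>l\<in>R. mv \<mu> j k l) = (\<Sum>l\<in>R. \<mu> l)" by linarith
  then show ?thesis using assms by (auto simp: configuration_def mv_def)
qed

lemma conf_finite:
  assumes "finite R"
  shows "finite {\<mu>. configuration R F \<mu>}"
proof -
  have "{\<mu>. configuration R F \<mu>} \<subseteq> {f. \<forall>x. (x \<in> R \<longrightarrow> f x \<in> {0..card F}) \<and> (x \<notin> R \<longrightarrow> f x = 0)}"
  proof safe
    fix \<mu> x assume c: "configuration R F \<mu>" and x: "x \<in> R"
    have "\<mu> x \<le> (\<Sum>l\<in>R. \<mu> l)" by (rule member_le_sum) (use x assms in auto)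
    then show "\<mu> x \<in> {0..card F}" using c by (auto simp: configuration_def)
  next
    fix \<mu> x assume "configuration R F \<mu>" "x \<notin> R" then show "\<mu> x = 0"
      by (auto simp: configuration_def)
  qed
  moreover have "finite {f. \<forall>x. (x \<in> R \<longrightarrow> f x \<in> {0..card F}) \<and> (x \<notin> R \<longrightarrow> f x = (0::nat))}"
    by (rule finite_set_of_finite_funs) (use assms in auto)
  ultimately show ?thesis by (rule finite_subset)
qed

definition Phi :: "'r set \<Rightarrow> ('r \<Rightarrow> nat \<Rightarrow> real) \<Rightarrow> ('r \<Rightarrow> nat) \<Rightarrow> real" where
  "Phi R D \<mu> = (\<Sum>l\<in>R. \<Sum>x<\<mu> l. D l (Suc x))"

lemma pot_min:
  fixes D :: "'r \<Rightarrow> nat \<Rightarrow> real"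
  assumes fR: "finite R" and fS: "finite S" and ne: "S \<noteq> {}"
    and A: "\<And>\<mu> j k. A \<mu> j k \<Longrightarrow> j \<in> R \<and> k \<in> R \<and> j \<noteq> k \<and> \<mu> j > 0"
    and cl: "\<And>\<mu> j k. \<mu> \<in> S \<Longrightarrow> A \<mu> j k \<Longrightarrow> mv \<mu> j k \<in> S"
  shows "\<exists>\<mu>\<in>S. \<forall>j k. A \<mu> j k \<longrightarrow> D j (\<mu> j) \<le> D k (\<mu> k + 1)"
proof -
  define m where "m = Min (Phi R D ` S)"
  have "m \<in> Phi R D ` S" unfolding m_def using fS ne by simp
  then obtain \<mu> where \<mu>: "\<mu> \<in> S" "Phi R D \<mu> = m" by auto
  have mn: "\<And>\<mu>'. \<mu>' \<in> S \<Longrightarrow> m \<le> Phi R D \<mu>'" unfolding m_def using fS by simp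
  show ?thesis
  proof (intro bexI[OF _ \<mu>(1)] allI impI)
    fix j k assume a: "A \<mu> j k"
    from A[OF a] have jk: "j \<in> R" "k \<in> R" "j \<noteq> k" "\<mu> j > 0" by auto
    then obtain n where n: "\<mu> j = Suc n" using gr0_implies_Suc by blast
    have "Phi R D (mv \<mu> j k) = Phi R D \<mu> + ((\<Sum>x<\<mu> j - 1. D j (Suc x)) - (\<Sum>x<\<mu> j. D j (Suc x)))
       + ((\<Sum>x<\<mu> k + 1. D k (Suc x)) - (\<Sum>x<\<mu> k. D k (Suc x)))"
      unfolding Phi_def by (rule mv_sum[OF fR jk(1-3), of "\<lambda>l n. \<Sum>x<n. D l (Suc x)"])
    also have "\<dots> = Phi R D \<mu> - D j (\<mu> j) + D k (\<mu> k + 1)"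
      using n by simp
    finally have "Phi R D (mv \<mu> j k) = Phi R D \<mu> - D j (\<mu> j) + D k (\<mu> k + 1)" .
    moreover have "m \<le> Phi R D (mv \<mu> j k)" using mn cl[OF \<mu>(1) a] by blast
    ultimately show "D j (\<mu> j) \<le> D k (\<mu> k + 1)" using \<mu>(2) by linarith
  qed
qed


lemma fc_pure: "follower_cost cf (pstrat i) j x = of_rat (if j = i then cf j (Suc x) else cf j x)"
  by (simp add: follower_cost_def pstrat_def)

lemma cf_mono:
  assumes "weakly_monotonic R cl cf" "l \<in> R" "a \<le> b"
  shows "(of_rat (cf l a) :: real) \<le> of_rat (cf l b)"
proof -
  have "cf l a \<le> cf l b"
    by (rule lift_Suc_mono_le[of "cf l"]) (use assms in \<open>auto simp: weakly_monotonic_def\<close>)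
  then show ?thesis by (simp add: of_rat_less_eq)
qed

lemma fc_bounds:
  assumes "weakly_monotonic R cl cf" "l \<in> R" "0 \<le> \<sigma> l" "\<sigma> l \<le> 1"
  shows "of_rat (cf l x) \<le> follower_cost cf \<sigma> l x" "follower_cost cf \<sigma> l x \<le> of_rat (cf l (Suc x))"
proof -
  have m: "(of_rat (cf l x) :: real) \<le> of_rat (cf l (Suc x))" using cf_mono[OF assms(1,2)] by simp
  have e: "follower_cost cf \<sigma> l x = of_rat (cf l x) + \<sigma> l * (of_rat (cf l (Suc x)) - of_rat (cf l x))"
    by (simp add: follower_cost_def algebra_simps)
  have "0 \<le> \<sigma> l * (of_rat (cf l (Suc x)) - of_rat (cf l x))" using m assms by simp
  moreover have "\<sigma> l * (of_rat (cf l (Suc x)) - of_rat (cf l x)) \<le> (of_rat (cf l (Suc x)) - of_rat (cf l x))"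
    using mult_right_mono[of "\<sigma> l" 1 "of_rat (cf l (Suc x)) - of_rat (cf l x)"] m assms by simp
  ultimately show "of_rat (cf l x) \<le> follower_cost cf \<sigma> l x" "follower_cost cf \<sigma> l x \<le> of_rat (cf l (Suc x))"
    using e by linarith+
qed

lemma ls_bounds:
  assumes "leader_strategy R \<sigma>" "finite R" "l \<in> R"
  shows "0 \<le> \<sigma> l" "\<sigma> l \<le> 1"
proof -
  show "0 \<le> \<sigma> l" using assms by (auto simp: leader_strategy_def)
  have "\<sigma> l \<le> (\<Sum>i\<in>R. \<sigma> i)" by (rule member_le_sum) (use assms in \<open>auto simp: leader_strategy_def\<close>)
  then show "\<sigma> l \<le> 1" using assms by (auto simp: leader_strategy_def)
qed

lemma base_NE:
  assumes "ssscg R F cl cf" "weakly_monotonic R cl cf" "i \<in> R"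
  shows "\<exists>\<mu>. is_NE R F cf (pstrat i) \<mu>"
proof -
  have fR: "finite R" using assms by (simp add: ssscg_def)
  define S where "S = {\<mu>. configuration R F \<mu>}"
  have "configuration R F (\<lambda>l. if l = i then card F else 0)"
    using assms fR by (simp add: configuration_def)
  then have ne: "S \<noteq> {}" by (auto simp: S_def)
  obtain \<mu> where \<mu>: "\<mu> \<in> S" and H: "\<forall>j k. (j \<in> R \<and> k \<in> R \<and> j \<noteq> k \<and> \<mu> j > 0) \<longrightarrow>
      follower_cost cf (pstrat i) j (\<mu> j) \<le> follower_cost cf (pstrat i) k (\<mu> k + 1)"
    using pot_min[OF fR conf_finite[OF fR, of F, folded S_def] ne,
        of "\<lambda>\<mu> j k. j \<in> R \<and> k \<in> R \<and> j \<noteq> k \<and> \<mu> j > 0" "follower_cost cf (pstrat i)"]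
    using mv_conf[OF fR] unfolding S_def by blast
  show ?thesis using \<mu> H unfolding S_def is_NE_def by auto
qed

lemma claim:
  assumes ss: "ssscg R F cl cf" and wm: "weakly_monotonic R cl cf"
    and ls: "leader_strategy R \<sigma>" and ne: "is_NE R F cf \<sigma> \<nu>" and iR: "i \<in> R"
  shows "\<exists>\<mu>. is_NE R F cf (pstrat i) \<mu> \<and> \<mu> i \<le> \<nu> i"
proof -
  have fR: "finite R" using ss by (simp add: ssscg_def)
  define S where "S = {\<mu>. configuration R F \<mu> \<and> \<mu> i \<le> \<nu> i}"
  have nuc: "configuration R F \<nu>" using ne by (simp add: is_NE_def)
  have neS: "S \<noteq> {}" using nuc by (auto simp: S_def)
  have fS: "finite S" by (rule finite_subset[OF _ conf_finite[OF fR, of F]]) (auto simp: S_def)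
  define A where "A = (\<lambda>\<mu> j k. j \<in> R \<and> k \<in> R \<and> j \<noteq> k \<and> \<mu> j > 0 \<and> (k = i \<longrightarrow> \<mu> i < \<nu> i))"
  have clo: "mv \<mu> j k \<in> S" if "\<mu> \<in> S" "A \<mu> j k" for \<mu> j k
    using that mv_conf[OF fR, of j k \<mu> F] unfolding S_def A_def by (auto simp: mv_def)
  define D where "D = follower_cost cf (pstrat i)"
  obtain \<mu> where \<mu>: "\<mu> \<in> S" and H: "\<And>j k. A \<mu> j k \<Longrightarrow> D j (\<mu> j) \<le> D k (\<mu> k + 1)"
    using pot_min[OF fR fS neS, of A D] clo unfolding A_def by blast
  have muc: "configuration R F \<mu>" and mui: "\<mu> i \<le> \<nu> i" using \<mu> by (auto simp: S_def)
  let ?e = "follower_cost cf \<sigma>"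
  have sb: "0 \<le> \<sigma> l" "\<sigma> l \<le> 1" if "l \<in> R" for l using ls_bounds[OF ls fR that] by auto
  have key: "D j (\<mu> j) \<le> D k (\<mu> k + 1)" if j: "j \<in> R" "k \<in> R" "j \<noteq> k" "\<mu> j > 0" for j k
  proof (cases "A \<mu> j k")
    case True then show ?thesis by (rule H)
  next
    case False
    then have ki: "k = i" and eq: "\<mu> i = \<nu> i" using j mui unfolding A_def by auto
    have ji: "j \<noteq> i" using ki j by simp
    have Di: "D i (\<mu> i + 1) = of_rat (cf i (Suc (Suc (\<nu> i))))" using eq by (simp add: D_def fc_pure)
    have Dj: "D l x = of_rat (cf l x)" if "l \<noteq> i" for l x using that by (simp add: D_def fc_pure)
    have chain: "of_rat (cf l x) \<le> D i (\<mu> i + 1)" if "l \<in> R" "l \<noteq> i" "x \<le> \<nu> l" "\<nu> l > 0" for l x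
    proof -
      have "(of_rat (cf l x)::real) \<le> of_rat (cf l (\<nu> l))" by (rule cf_mono[OF wm that(1,3)])
      also have "\<dots> \<le> ?e l (\<nu> l)" by (rule fc_bounds(1)[where \<sigma>=\<sigma>, OF wm that(1) sb[OF that(1)]])
      also have "\<dots> \<le> ?e i (Suc (\<nu> i))" using ne that iR unfolding is_NE_def by auto
      also have "\<dots> \<le> of_rat (cf i (Suc (Suc (\<nu> i))))" by (rule fc_bounds(2)[where \<sigma>=\<sigma>, OF wm iR sb[OF iR]])
      finally show ?thesis using Di by simp
    qed
    show ?thesis
    proof (cases "\<mu> j \<le> \<nu> j")
      case True then show ?thesis using chain[OF j(1) ji True] j ki Dj[OF ji] by simp
    next
      case False
      have "\<exists>k'\<in>R. k' \<noteq> i \<and> \<mu> k' < \<nu> k'"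
      proof (rule ccontr)
        assume "\<not> ?thesis"
        then have le: "\<forall>l\<in>R. \<nu> l \<le> \<mu> l" using eq by (metis linorder_not_le order_refl)
        have "(\<Sum>l\<in>R. \<nu> l) < (\<Sum>l\<in>R. \<mu> l)"
          by (rule sum_strict_mono_ex1[OF fR le]) (use j False in \<open>auto simp: not_le\<close>)
        then show False using muc nuc by (simp add: configuration_def)
      qed
      then obtain k' where k': "k' \<in> R" "k' \<noteq> i" "\<mu> k' < \<nu> k'" by blast
      have "k' \<noteq> j" using k' False by auto
      then have "A \<mu> j k'" using j k' unfolding A_def by auto
      then have "D j (\<mu> j) \<le> D k' (\<mu> k' + 1)" by (rule H)
      also have "\<dots> = of_rat (cf k' (\<mu> k' + 1))" using Dj[OF k'(2)] by simp
      also have "\<dots> \<le> D i (\<mu> i + 1)" by (rule chain) (use k' in auto)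
      finally show ?thesis using ki by simp
    qed
  qed
  have "is_NE R F cf (pstrat i) \<mu>" unfolding is_NE_def using muc key by (auto simp: D_def)
  then show ?thesis using mui by blast
qed


lemma pstrat_ls: "i \<in> R \<Longrightarrow> finite R \<Longrightarrow> leader_strategy R (pstrat i)"
  by (simp add: leader_strategy_def pstrat_def)

lemma lc_pure: "finite R \<Longrightarrow> i \<in> R \<Longrightarrow> leader_cost R cl (pstrat i) \<nu> = of_rat (cl i (Suc (\<nu> i)))"
  proof -
  assume "finite R" "i \<in> R"
  have "(\<Sum>j\<in>R. pstrat i j * of_rat (cl j (Suc (\<nu> j)))) = (\<Sum>j\<in>R. if j = i then (of_rat (cl j (Suc (\<nu> j))) :: real) else 0)"
    by (rule sum.cong) (auto simp: pstrat_def)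
  then show ?thesis using \<open>finite R\<close> \<open>i \<in> R\<close> by (simp add: leader_cost_def)
qed

lemma step2:
  assumes ss: "ssscg R F cl cf" and wm: "weakly_monotonic R cl cf"
    and ls: "leader_strategy R \<sigma>" and ne: "is_NE R F cf \<sigma> \<nu>"
  shows "\<exists>i\<in>R. \<exists>\<mu>. is_NE R F cf (pstrat i) \<mu> \<and> of_rat (cl i (Suc (\<mu> i))) \<le> leader_cost R cl \<sigma> \<nu>"
proof -
  have fR: "finite R" using ss by (simp add: ssscg_def)
  define U where "U = {i\<in>R. \<sigma> i > 0}"
  define c where "c = (\<lambda>i. (of_rat (cl i (Suc (\<nu> i))) :: real))"
  have fU: "finite U" using fR by (simp add: U_def)
  have nU: "U \<noteq> {}"
  proof
    assume "U = {}"
    then have "\<forall>i\<in>R. \<sigma> i = 0" using ls unfolding U_def leader_strategy_def by (metis (mono_tags, lifting) empty_Collect_eq order_less_le)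
    then show False using ls by (simp add: leader_strategy_def)
  qed
  have "Min (c ` U) \<in> c ` U" using fU nU by simp
  then obtain i where iU: "i \<in> U" and ci: "c i = Min (c ` U)" by auto
  have cmin: "c i \<le> c j" if "j \<in> U" for j using ci fU that by simp
  have iR: "i \<in> R" using iU by (simp add: U_def)
  have "c i = (\<Sum>j\<in>R. \<sigma> j * c i)" using ls by (simp add: leader_strategy_def sum_distrib_right[symmetric])
  also have "\<dots> \<le> (\<Sum>j\<in>R. \<sigma> j * c j)"
  proof (rule sum_mono)
    fix j assume j: "j \<in> R"
    show "\<sigma> j * c i \<le> \<sigma> j * c j"
    proof (cases "\<sigma> j > 0")
      case True then show ?thesis using cmin[of j] j by (simp add: U_def)
    next
      case False then have "\<sigma> j = 0" using ls by (simp add: leader_strategy_def) (metis order_less_le)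
      then show ?thesis by simp
    qed
  qed
  also have "\<dots> = leader_cost R cl \<sigma> \<nu>" by (simp add: leader_cost_def c_def)
  finally have ci_le: "c i \<le> leader_cost R cl \<sigma> \<nu>" .
  obtain \<mu> where \<mu>: "is_NE R F cf (pstrat i) \<mu>" "\<mu> i \<le> \<nu> i" using claim[OF ss wm ls ne iR] by blast
  have "(of_rat (cl i (Suc (\<mu> i))) :: real) \<le> c i"
  proof -
    have "cl i (Suc (\<mu> i)) \<le> cl i (Suc (\<nu> i))"
      by (rule lift_Suc_mono_le[of "cl i"]) (use wm iR \<mu>(2) in \<open>auto simp: weakly_monotonic_def\<close>)
    then show ?thesis by (simp add: c_def of_rat_less_eq)
  qed
  then show ?thesis using \<mu> iR ci_le by force
qed

theorem theorem7:
  fixes R :: "'r set" and F :: "'f set"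
    and cl cf :: "'r \<Rightarrow> nat \<Rightarrow> rat"
  assumes "ssscg R F cl cf"
    and "weakly_monotonic R cl cf"
  shows "\<exists>\<sigma> \<nu>. is_OSE R F cl cf \<sigma> \<nu> \<and> pure_strategy R \<sigma>"
proof -
  have fR: "finite R" and neR: "R \<noteq> {}" using assms(1) by (auto simp: ssscg_def)
  define Q where "Q = {(i, \<mu>). i \<in> R \<and> is_NE R F cf (pstrat i) \<mu>}"
  define f where "f = (\<lambda>(i, \<mu>::'r \<Rightarrow> nat). (of_rat (cl i (Suc (\<mu> i))) :: real))"
  have fQ: "finite Q"
    by (rule finite_subset[OF _ finite_cartesian_product[OF fR conf_finite[OF fR, of F]]])
       (auto simp: Q_def is_NE_def)
  obtain i0 where "i0 \<in> R" using neR by blast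
  then obtain \<mu>0 where "is_NE R F cf (pstrat i0) \<mu>0" using base_NE[OF assms] by blast
  then have nQ: "Q \<noteq> {}" using \<open>i0 \<in> R\<close> by (auto simp: Q_def)
  have "Min (f ` Q) \<in> f ` Q" using fQ nQ by simp
  then obtain i \<mu> where iQ: "(i, \<mu>) \<in> Q" and fi: "f (i, \<mu>) = Min (f ` Q)" by auto
  have fmin: "f (i, \<mu>) \<le> f q" if "q \<in> Q" for q using fi fQ that by simp
  have iR: "i \<in> R" and ne: "is_NE R F cf (pstrat i) \<mu>" using iQ by (auto simp: Q_def)
  have "is_OSE R F cl cf (pstrat i) \<mu>"
    unfolding is_OSE_def
  proof (intro conjI allI impI)
    show "leader_strategy R (pstrat i)" by (rule pstrat_ls[OF iR fR])
    show "is_NE R F cf (pstrat i) \<mu>" by (rule ne)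
    fix \<sigma>' \<nu>' assume a: "leader_strategy R \<sigma>' \<and> is_NE R F cf \<sigma>' \<nu>'"
    obtain j \<mu>' where j: "j \<in> R" "is_NE R F cf (pstrat j) \<mu>'"
      "of_rat (cl j (Suc (\<mu>' j))) \<le> leader_cost R cl \<sigma>' \<nu>'"
      using step2[OF assms] a by blast
    have "(j, \<mu>') \<in> Q" using j by (simp add: Q_def)
    then have "f (i, \<mu>) \<le> f (j, \<mu>')" by (rule fmin)
    then show "leader_cost R cl (pstrat i) \<mu> \<le> leader_cost R cl \<sigma>' \<nu>'"
      using j lc_pure[OF fR iR] by (simp add: f_def)
  qed
  moreover have "pure_strategy R (pstrat i)"
    using pstrat_ls[OF iR fR] iR by (auto simp: pure_strategy_def pstrat_def)
  ultimately show ?thesis by blast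
qed

end
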